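(* Let $n=p^2$ where $p$ is prime, and let $k\le\sqrt{n}$. Then the code $\mathcal{C}(r=p,p,S=\{0,1,\dots,k-1\})$ is a binary $k$-PIR code of dimension $n$ with redundancy $k\sqrt{n}$. In particular, for all $k\le\sqrt n$, $r_P(n,k)=\mathcal{O}(k\sqrt n)$.
   Context: Array construction: let $r,p$ be positive integers, $n=rp$, and $S=\{s_0<s_1<\dots<s_{k-1}\}\subseteq\{0,\dots,p-1\}$. For $s,t\in\{0,\dots,p-1\}$ let $D_{s,t}=\{(i,\langle t+is\rangle_p): i=0,\dots,r-1\}$, where $\langle x\rangle_p=x\bmod p$. An information vector $\boldsymbol{x}\in\{0,1\}^n$ is written as an array $(x_{i,j})_{(i,j)\in\{0,\dots,r-1\}\times\{0,\dots,p-1\}}$, and $kp$ redundancy bits are defined by $\rho_{\ell,t}=\sum_{(i,j)\in D_{s_\ell,t}}x_{i,j}\pmod 2$ for $\ell\in\{0,\dots,k-1\}$, $t\in\{0,\dots,p-1\}$. The binary code $\mathcal{C}(r,p,S)$ consists of all words $(\boldsymbol{x},(\rho_{\ell,t})_{\ell,t})$, of length $n+kp$. A binary $k$-PIR code of dimension $n$ and length $N$ is a binary linear code encoding $n$ information bits such that every information bit has $k$ mutually disjoint sets of coordinates from each of which it can be computed; its redundancy is $N-n$, and $r_P(n,k)$ is the minimum redundancy of a binary $k$-PIR code of dimension $n$. *)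

theory Defs
  imports Complex_Main "HOL-Computational_Algebra.Primes"
begin

text \<open>Binary vectors of length m are modelled as functions nat => bool
  that vanish (are False) outside {0..<m}; addition over GF(2) is pointwise xor.\<close>

definition binvec :: "nat \<Rightarrow> (nat \<Rightarrow> bool) set" where
  "binvec m = {x. \<forall>i. m \<le> i \<longrightarrow> \<not> x i}"

definition vadd :: "(nat \<Rightarrow> bool) \<Rightarrow> (nat \<Rightarrow> bool) \<Rightarrow> (nat \<Rightarrow> bool)" where
  "vadd x y = (\<lambda>i. x i \<noteq> y i)"

definition binary_linear_code :: "nat \<Rightarrow> nat \<Rightarrow> ((nat \<Rightarrow> bool) \<Rightarrow> (nat \<Rightarrow> bool)) \<Rightarrow> bool" where
  "binary_linear_code n N enc \<longleftrightarrow>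
     (\<forall>x \<in> binvec n. enc x \<in> binvec N) \<and>
     (\<forall>x \<in> binvec n. \<forall>y \<in> binvec n. enc (vadd x y) = vadd (enc x) (enc y)) \<and>
     inj_on enc (binvec n)"

definition recovers :: "nat \<Rightarrow> ((nat \<Rightarrow> bool) \<Rightarrow> (nat \<Rightarrow> bool)) \<Rightarrow> nat set \<Rightarrow> nat \<Rightarrow> bool" where
  "recovers n enc R i \<longleftrightarrow>
     (\<forall>x \<in> binvec n. \<forall>y \<in> binvec n. (\<forall>c \<in> R. enc x c = enc y c) \<longrightarrow> x i = y i)"

definition is_PIR_code :: "nat \<Rightarrow> nat \<Rightarrow> nat \<Rightarrow> ((nat \<Rightarrow> bool) \<Rightarrow> (nat \<Rightarrow> bool)) \<Rightarrow> bool" where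
  "is_PIR_code n N k enc \<longleftrightarrow>
     binary_linear_code n N enc \<and>
     (\<forall>i < n. \<exists>R :: nat \<Rightarrow> nat set.
        (\<forall>j < k. R j \<subseteq> {..<N} \<and> recovers n enc (R j) i) \<and>
        (\<forall>j1 < k. \<forall>j2 < k. j1 \<noteq> j2 \<longrightarrow> R j1 \<inter> R j2 = {}))"

definition r_P :: "nat \<Rightarrow> nat \<Rightarrow> nat" where
  "r_P n k = (LEAST r. \<exists>N enc. is_PIR_code n N k enc \<and> r = N - n)"

text \<open>Information bit x_{i,j} sits at coordinate i*p + j
  (0 <= i < r, 0 <= j < p); redundancy bit rho_{l,t} sits at coordinate
  r*p + l*p + t (0 <= l < |S|, 0 <= t < p); s_l is the l-th smallest element of S.\<close>

definition sel :: "nat set \<Rightarrow> nat \<Rightarrow> nat" where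
  "sel S l = sorted_list_of_set S ! l"

definition diag_set :: "nat \<Rightarrow> nat \<Rightarrow> nat \<Rightarrow> nat \<Rightarrow> (nat \<times> nat) set" where
  "diag_set r p s t = {(i, (t + i * s) mod p) | i. i < r}"

definition array_code :: "nat \<Rightarrow> nat \<Rightarrow> nat set \<Rightarrow> (nat \<Rightarrow> bool) \<Rightarrow> (nat \<Rightarrow> bool)" where
  "array_code r p S x = (\<lambda>c.
     if c < r * p then x c
     else if c < r * p + card S * p then
       (let l = (c - r * p) div p; t = (c - r * p) mod p in
        odd (card {(i, j) \<in> diag_set r p (sel S l) t. x (i * p + j)}))
     else False)"

end

theory Submission
  imports Defs
begin

lemma parity_xor:
  assumes "finite D"
  shows "odd (card {z\<in>D. f z \<noteq> g z}) = (odd (card {z\<in>D. f z}) \<noteq> odd (card {z\<in>D. g z}))"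
  using assms
proof (induction D rule: finite_induct)
  case empty
  then show ?case by simp
next
  case (insert a F)
  have e: "\<And>P. {z \<in> insert a F. P z} = (if P a then insert a {z\<in>F. P z} else {z\<in>F. P z})"
    by auto
  have c: "\<And>P. card {z \<in> insert a F. P z} = (if P a then Suc (card {z\<in>F. P z}) else card {z\<in>F. P z})"
    using insert by (subst e) simp
  show ?case using insert.IH by (simp only: c) (cases "f a"; cases "g a"; simp)
qed

lemma parity_recover:
  assumes "finite D" "z0 \<in> D" "\<forall>z\<in>D-{z0}. f z = g z"
    "odd (card {z\<in>D. f z}) = odd (card {z\<in>D. g z})"
  shows "f z0 = g z0"
proof (rule ccontr)
  assume ne: "f z0 \<noteq> g z0"
  have "{z\<in>D. f z \<noteq> g z} = {z0}" using assms(2,3) ne by auto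
  then have "odd (card {z\<in>D. f z \<noteq> g z})" by simp
  then show False using parity_xor[OF assms(1), of f g] assms(4) by simp
qed

lemma info_lt: "(i'::nat) < p \<Longrightarrow> j < p \<Longrightarrow> i' * p + j < p * p"
proof -
  assume a: "i' < p" "j < p"
  have "i' * p + j < i' * p + p" using a by simp
  also have "\<dots> = Suc i' * p" by simp
  also have "\<dots> \<le> p * p" using a by (intro mult_le_mono1) simp
  finally show ?thesis .
qed

lemma key_arith:
  fixes p i' a l1 l2 t1 t2 :: nat
  assumes "prime p" "i' < p" "a < p" "i' \<noteq> a" "l1 < p" "l2 < p" "l1 \<noteq> l2"
    "(t1 + i' * l1) mod p = (t2 + i' * l2) mod p"
    "(t1 + a * l1) mod p = (t2 + a * l2) mod p"
  shows False
proof -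
  have d1: "int p dvd (int t1 + int i' * int l1) - (int t2 + int i' * int l2)"
    using assms(8) by (metis mod_eq_dvd_iff of_nat_add of_nat_mod of_nat_mult)
  have d2: "int p dvd (int t1 + int a * int l1) - (int t2 + int a * int l2)"
    using assms(9) by (metis mod_eq_dvd_iff of_nat_add of_nat_mod of_nat_mult)
  have "int p dvd ((int t1 + int i' * int l1) - (int t2 + int i' * int l2))
      - ((int t1 + int a * int l1) - (int t2 + int a * int l2))"
    using d1 d2 by (rule dvd_diff)
  moreover have "((int t1 + int i' * int l1) - (int t2 + int i' * int l2))
      - ((int t1 + int a * int l1) - (int t2 + int a * int l2)) = (int i' - int a) * (int l1 - int l2)"
    by (simp add: algebra_simps)
  ultimately have d: "int p dvd (int i' - int a) * (int l1 - int l2)" by simp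
  have pp: "prime (int p)" using assms(1) by simp
  from d pp have "int p dvd (int i' - int a) \<or> int p dvd (int l1 - int l2)"
    using prime_dvd_mult_iff by blast
  then show False
  proof
    assume h: "int p dvd (int i' - int a)"
    have "\<bar>int p\<bar> \<le> \<bar>int i' - int a\<bar>" using dvd_imp_le_int[OF _ h] assms(4) by simp
    then show False using assms(2,3) by simp
  next
    assume h: "int p dvd (int l1 - int l2)"
    have "\<bar>int p\<bar> \<le> \<bar>int l1 - int l2\<bar>" using dvd_imp_le_int[OF _ h] assms(7) by simp
    then show False using assms(5,6) by simp
  qed
qed

lemma t_prop:
  fixes p a l b :: nat
  assumes "0 < p" "b < p"
  shows "((b + p - a * l mod p) mod p + a * l) mod p = b"
proof -
  have le: "a * l mod p \<le> p" using assms by (simp add: less_imp_le)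
  have "((b + p - a * l mod p) mod p + a * l) mod p = ((b + p - a * l mod p) + a * l) mod p"
    by (simp add: mod_add_left_eq)
  also have "(b + p - a * l mod p) + a * l = b + p + p * (a * l div p)"
    using le div_mult_mod_eq[of "a*l" p] by (metis add.commute add_diff_assoc2 le_add2 mult.commute
        diff_add_inverse2 add.assoc le_add_diff_inverse2 trans_le_add2)
  also have "(b + p + p * (a * l div p)) mod p = b" using assms by simp
  finally show ?thesis .
qed


lemma coll: "{(i, j). (i, j) \<in> D \<and> f i j} = {z \<in> D. case_prod f z}"
  by auto

lemma sel_range: "l < k \<Longrightarrow> sel {0..<k} l = l"
  by (simp add: sel_def)

lemma diag_eq: "diag_set r p s t = (\<lambda>i. (i, (t + i * s) mod p)) ` {..<r}"
  unfolding diag_set_def by auto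

lemma E1: "c < p * p \<Longrightarrow> array_code p p S x c = x c"
  by (simp add: array_code_def)

lemma E3: "p * p + card S * p \<le> c \<Longrightarrow> array_code p p S x c = False"
  by (simp add: array_code_def)

lemma E2:
  assumes "l < k" "t < p"
  shows "array_code p p {0..<k} x (p * p + l * p + t)
     = odd (card {(i, j) \<in> diag_set p p l t. x (i * p + j)})"
proof -
  have p0: "0 < p" using assms by simp
  have lt: "p * p + l * p + t < p * p + k * p"
  proof -
    have "l * p + t < Suc l * p" using assms by simp
    also have "\<dots> \<le> k * p" using assms by (intro mult_le_mono1) simp
    finally show ?thesis by simp
  qed
  have dv: "(l * p + t) div p = l" using assms by simp
  have md: "(l * p + t) mod p = t" using assms by simp
  show ?thesis using lt dv md assms
    by (simp add: array_code_def Let_def sel_range)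
qed

theorem theorem8:
  fixes p n k :: nat
  assumes "prime p" and "n = p ^ 2" and "real k \<le> sqrt (real n)"
  shows "is_PIR_code n (n + k * p) k (array_code p p {0..<k})
         \<and> real ((n + k * p) - n) = real k * sqrt (real n)
         \<and> real (r_P n k) \<le> real k * sqrt (real n)"
proof -
  have p0: "0 < p" using assms(1) prime_gt_0_nat by blast
  have sq: "sqrt (real n) = real p" using assms(2) by simp
  have kp: "k \<le> p" using assms(3) sq by simp
  have nn: "n = p * p" using assms(2) by (simp add: power2_eq_square)
  define enc where "enc = array_code p p {0..<k}"
  have ck: "card {0..<k} = k" by simp
  have lin: "binary_linear_code n (n + k * p) enc"
    unfolding binary_linear_code_def
  proof (intro conjI ballI)
    fix x assume "x \<in> binvec n"
    show "enc x \<in> binvec (n + k * p)"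
      unfolding binvec_def enc_def using E3[of p "{0..<k}"] nn by auto
  next
    fix x y assume x: "x \<in> binvec n" and y: "y \<in> binvec n"
    show "enc (vadd x y) = vadd (enc x) (enc y)"
    proof
      fix c
      show "enc (vadd x y) c = vadd (enc x) (enc y) c"
      proof (cases "c < p * p")
        case True
        then show ?thesis by (simp add: enc_def E1 vadd_def)
      next
        case F: False
        show ?thesis
        proof (cases "c < p * p + k * p")
          case False
          then show ?thesis using E3[of p "{0..<k}"] by (simp add: enc_def vadd_def)
        next
          case True
          define l where "l = (c - p * p) div p"
          define t where "t = (c - p * p) mod p"
          have c: "c = p * p + l * p + t" using F unfolding l_def t_def
            by (metis add.assoc div_mult_mod_eq le_add_diff_inverse not_less)
          have tp: "t < p" unfolding t_def using p0 by simp
          have lk: "l < k"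
          proof (rule ccontr)
            assume "\<not> l < k"
            then have "k * p \<le> l * p" by simp
            then show False using True c by linarith
          qed
          let ?D = "diag_set p p l t"
          have fin: "finite ?D" by (simp add: diag_eq)
          have eqs: "{(i, j) \<in> ?D. vadd x y (i * p + j)}
             = {z \<in> ?D. (\<lambda>(i, j). x (i * p + j)) z \<noteq> (\<lambda>(i, j). y (i * p + j)) z}"
            by (auto simp: vadd_def)
          show ?thesis
            unfolding c enc_def using E2[OF lk tp] parity_xor[OF fin, of "\<lambda>(i, j). x (i * p + j)" "\<lambda>(i, j). y (i * p + j)"]
            by (simp only: eqs) (simp add: vadd_def coll, blast)
        qed
      qed
    qed
  next
    show "inj_on enc (binvec n)"
    proof (rule inj_onI)
      fix x y assume x: "x \<in> binvec n" and y: "y \<in> binvec n" and e: "enc x = enc y"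
      show "x = y"
      proof
        fix c
        show "x c = y c"
        proof (cases "c < p * p")
          case True
          then show ?thesis using e E1[OF True, of "{0..<k}"] unfolding enc_def by metis
        next
          case False
          then show ?thesis using x y nn unfolding binvec_def by auto
        qed
      qed
    qed
  qed
  have pir: "\<forall>i < n. \<exists>R :: nat \<Rightarrow> nat set.
        (\<forall>j < k. R j \<subseteq> {..<n + k * p} \<and> recovers n enc (R j) i) \<and>
        (\<forall>j1 < k. \<forall>j2 < k. j1 \<noteq> j2 \<longrightarrow> R j1 \<inter> R j2 = {})"
  proof (intro allI impI)
    fix i assume i: "i < n"
    define a where "a = i div p"
    define b where "b = i mod p"
    have ap: "a < p" unfolding a_def using i nn by (simp add: less_mult_imp_div_less)
    have bp: "b < p" unfolding b_def using p0 by simp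
    have iab: "i = a * p + b" unfolding a_def b_def by simp
    define t where "t l = (b + p - a * l mod p) mod p" for l
    have tp: "t l < p" for l unfolding t_def using p0 by simp
    have T: "(t l + a * l) mod p = b" for l unfolding t_def using t_prop[OF p0 bp] .
    define R where "R l = insert (p * p + l * p + t l)
        ((\<lambda>i'. i' * p + (t l + i' * l) mod p) ` ({..<p} - {a}))" for l
    show "\<exists>R :: nat \<Rightarrow> nat set.
        (\<forall>j < k. R j \<subseteq> {..<n + k * p} \<and> recovers n enc (R j) i) \<and>
        (\<forall>j1 < k. \<forall>j2 < k. j1 \<noteq> j2 \<longrightarrow> R j1 \<inter> R j2 = {})"
    proof (intro exI[of _ R] conjI allI impI)
      fix l assume lk: "l < k"
      show "R l \<subseteq> {..<n + k * p}"
      proof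
        fix c assume "c \<in> R l"
        then consider "c = p * p + l * p + t l"
          | i' where "i' < p" "c = i' * p + (t l + i' * l) mod p"
          unfolding R_def by auto
        then show "c \<in> {..<n + k * p}"
        proof cases
          case 1
          have "l * p + t l < Suc l * p" using tp[of l] by simp
          also have "\<dots> \<le> k * p" using lk by (intro mult_le_mono1) simp
          finally show ?thesis using 1 nn by simp
        next
          case 2
          then show ?thesis using info_lt[of i' p "(t l + i' * l) mod p"] p0 nn by simp
        qed
      qed
      show "recovers n enc (R l) i"
        unfolding recovers_def
      proof (intro ballI impI)
        fix x y assume x: "x \<in> binvec n" and y: "y \<in> binvec n"
          and ag: "\<forall>c\<in>R l. enc x c = enc y c"
        let ?D = "diag_set p p l (t l)"
        have fin: "finite ?D" by (simp add: diag_eq)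
        have par: "odd (card {(i, j) \<in> ?D. x (i * p + j)}) = odd (card {(i, j) \<in> ?D. y (i * p + j)})"
          using ag E2[OF lk tp, of x] E2[OF lk tp, of y] unfolding R_def enc_def by auto
        have z0: "(a, b) \<in> ?D" unfolding diag_set_def using ap T[of l] by (auto simp: mult.commute)
        have oth: "\<forall>z\<in>?D - {(a, b)}. (\<lambda>(i, j). x (i * p + j)) z = (\<lambda>(i, j). y (i * p + j)) z"
        proof
          fix z assume z: "z \<in> ?D - {(a, b)}"
          then obtain i' where i': "i' < p" "z = (i', (t l + i' * l) mod p)"
            unfolding diag_set_def by auto
          have ia: "i' \<noteq> a" using z i' T[of l] by (auto simp: mult.commute)
          have mem: "i' * p + (t l + i' * l) mod p \<in> R l" unfolding R_def using i' ia by auto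
          have lt: "i' * p + (t l + i' * l) mod p < p * p" using info_lt i' p0 by simp
          show "(\<lambda>(i, j). x (i * p + j)) z = (\<lambda>(i, j). y (i * p + j)) z"
            using ag mem E1[OF lt, of "{0..<k}" x] E1[OF lt, of "{0..<k}" y] i'(2)
            unfolding enc_def by simp
        qed
        have "(\<lambda>(i, j). x (i * p + j)) (a, b) = (\<lambda>(i, j). y (i * p + j)) (a, b)"
          by (rule parity_recover[OF fin z0 oth]) (use par in \<open>simp add: coll\<close>)
        then show "x i = y i" using iab by simp
      qed
    next
      fix l1 l2 assume l1: "l1 < k" and l2: "l2 < k" and ne: "l1 \<noteq> l2"
      show "R l1 \<inter> R l2 = {}"
      proof (rule ccontr)
        assume "R l1 \<inter> R l2 \<noteq> {}"
        then obtain c where c1: "c \<in> R l1" and c2: "c \<in> R l2" by blast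
        have info_ne: "i' * p + (t l + i' * l) mod p \<noteq> p * p + l' * p + t l'"
          if "i' < p" for i' l l'
          using info_lt[OF that, of "(t l + i' * l) mod p"] p0 by simp
        from c1 consider "c = p * p + l1 * p + t l1"
          | i1 where "i1 < p" "i1 \<noteq> a" "c = i1 * p + (t l1 + i1 * l1) mod p"
          unfolding R_def by auto
        then show False
        proof cases
          case 1
          note o1 = 1
          from c2 consider "c = p * p + l2 * p + t l2"
            | i2 where "i2 < p" "i2 \<noteq> a" "c = i2 * p + (t l2 + i2 * l2) mod p"
            unfolding R_def by auto
          then show False
          proof cases
            case 1
            have "(l1 * p + t l1) div p = (l2 * p + t l2) div p" using 1 o1 by simp
            then show False using ne tp[of l1] tp[of l2] by simp
          next
            case 2
            then show False using o1 info_ne by metis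
          qed
        next
          case 2
          note c1' = 2
          from c2 consider "c = p * p + l2 * p + t l2"
            | i2 where "i2 < p" "i2 \<noteq> a" "c = i2 * p + (t l2 + i2 * l2) mod p"
            unfolding R_def by auto
          then show False
          proof cases
            case 1
            then show False using c1' info_ne by metis
          next
            case 2
            have m1: "(t l1 + i1 * l1) mod p < p" "(t l2 + i2 * l2) mod p < p" using p0 by auto
            have eq: "i1 * p + (t l1 + i1 * l1) mod p = i2 * p + (t l2 + i2 * l2) mod p"
              using c1' 2 by simp
            have "(i1 * p + (t l1 + i1 * l1) mod p) div p = (i2 * p + (t l2 + i2 * l2) mod p) div p"
              using eq by simp
            then have ii: "i1 = i2" using m1 by simp
            have "(t l1 + i1 * l1) mod p = (t l2 + i1 * l2) mod p" using eq ii by simp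
            moreover have "(t l1 + a * l1) mod p = (t l2 + a * l2) mod p" using T by simp
            ultimately show False
              using key_arith[OF assms(1) c1'(1) ap c1'(2), of l1 l2] l1 l2 kp ne by simp
          qed
        qed
      qed
    qed
  qed
  have P: "is_PIR_code n (n + k * p) k enc"
    unfolding is_PIR_code_def using lin pir by blast
  have R: "r_P n k \<le> k * p"
    unfolding r_P_def using P by (intro Least_le) auto
  have R': "real (r_P n k) \<le> real k * real p"
    using R by (metis of_nat_le_iff of_nat_mult)
  show ?thesis using P R' sq unfolding enc_def by simp
qed

end
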